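(* Let $X\subseteq\mathbb{C}(\mathbb{Z})$ admit a reproducing filter $\phi\in\mathbb{C}_m(\mathbb{Z})$ with $\|\phi\|_2\le\mathsf{R}/\sqrt{2m+1}$. Then for every integer $k\ge2$, the $k$-fold convolution power $\phi^k=\phi*\cdots*\phi\in\mathbb{C}_{km}(\mathbb{Z})$ is also reproducing for $X$, and $$\|\phi^k\|_2\le\|\mathcal{F}_{km}[\phi^k]\|_1\le\frac{c_k\mathsf{R}^k}{\sqrt{2km+1}},$$ where the constants $c_k$ depend only on $k$ and satisfy $c_k=2^{k-1}$ for $k=2^p$, $c_{2k+1}\le3\sqrt{2k+1}\,c_k^2$ for $k\in\mathbb{N}$ (with $c_1=1$), and $\log(c_k)=O(k\log k)$.
   Context: $\mathbb{C}(\mathbb{Z})$: two-sided complex sequences; $\mathbb{C}_p(\mathbb{Z})$: those with $x_t=0$ for $|t|>p$. Convolution $(u*v)_t=\sum_\tau u_\tau v_{t-\tau}$; $\phi$ reproduces $X$ if $\phi*x=x$ for all $x\in X$. $\|\cdot\|_2$ on sequences is the $\ell_2$-norm. DFT $(\mathcal{F}_p[u])_k=(2p+1)^{-1/2}\sum_{|\tau|\le p}\exp(-i2\pi k\tau/(2p+1))u_\tau$, $k=0,\dots,2p$. *)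

theory Defs
  imports "HOL-Analysis.Analysis" "HOL-Library.Landau_Symbols"
begin

type_synonym cseq = "int \<Rightarrow> complex"

definition supp_in :: "nat \<Rightarrow> cseq set" where
  "supp_in p = {x. \<forall>t. \<bar>t\<bar> > int p \<longrightarrow> x t = 0}"

definition conv :: "cseq \<Rightarrow> cseq \<Rightarrow> cseq" where
  "conv u v = (\<lambda>t. infsum (\<lambda>\<tau>. u \<tau> * v (t - \<tau>)) UNIV)"

definition reproduces :: "cseq \<Rightarrow> cseq set \<Rightarrow> bool" where
  "reproduces \<phi> X \<longleftrightarrow> (\<forall>x\<in>X. conv \<phi> x = x)"

fun conv_pow :: "cseq \<Rightarrow> nat \<Rightarrow> cseq" where
  "conv_pow u 0 = (\<lambda>t. if t = 0 then 1 else 0)"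
| "conv_pow u (Suc n) = conv u (conv_pow u n)"

definition l2norm :: "cseq \<Rightarrow> real" where
  "l2norm x = sqrt (infsum (\<lambda>t. (cmod (x t))\<^sup>2) UNIV)"

definition dft :: "nat \<Rightarrow> cseq \<Rightarrow> nat \<Rightarrow> complex" where
  "dft p u k = complex_of_real (1 / sqrt (real (2*p+1))) *
     (\<Sum>\<tau>\<in>{-int p..int p}.
        exp (- \<i> * complex_of_real (2 * pi * real k * real_of_int \<tau> / real (2*p+1))) * u \<tau>)"

definition dft_l1 :: "nat \<Rightarrow> cseq \<Rightarrow> real" where
  "dft_l1 p u = (\<Sum>k\<le>2*p. cmod (dft p u k))"

end

theory Submission
  imports Defs
begin


lemma infsum_supp:
  assumes "finite S" "\<And>t. t \<notin> S \<Longrightarrow> f t = 0"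
  shows "infsum f UNIV = sum f S"
proof -
  have "infsum f UNIV = infsum f S"
    by (rule infsum_cong_neutral) (use assms in auto)
  also have "\<dots> = sum f S" using assms(1) by (rule infsum_finite)
  finally show ?thesis .
qed

lemma supp_inD: "u \<in> supp_in p \<Longrightarrow> \<bar>t\<bar> > int p \<Longrightarrow> u t = 0"
  by (auto simp: supp_in_def)

lemma supp_in_out: "u \<in> supp_in p \<Longrightarrow> t \<notin> {-int p..int p} \<Longrightarrow> u t = 0"
  by (auto simp: supp_in_def)

lemma supp_in_mono: "u \<in> supp_in a \<Longrightarrow> a \<le> b \<Longrightarrow> u \<in> supp_in b"
  by (auto simp: supp_in_def)

lemma conv_eq:
  assumes "\<phi> \<in> supp_in a"
  shows "conv \<phi> \<psi> t = (\<Sum>\<tau>\<in>{-int a..int a}. \<phi> \<tau> * \<psi> (t-\<tau>))"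
  unfolding conv_def
  by (rule infsum_supp) (use supp_in_out[OF assms] in auto)

lemma sum_supp_big:
  assumes "u \<in> supp_in a" "a \<le> P"
  shows "(\<Sum>\<tau>\<in>{-int P..int P}. g \<tau> * u \<tau>) = (\<Sum>\<tau>\<in>{-int a..int a}. g \<tau> * u \<tau>)"
  by (rule sum.mono_neutral_right) (use assms supp_in_out[OF assms(1)] in auto)

lemma shift_sum:
  assumes "\<psi> \<in> supp_in b" "\<bar>\<tau>\<bar> \<le> int a" "a + b \<le> P"
  shows "(\<Sum>\<sigma>\<in>{-int P..int P}. \<psi> (\<sigma>-\<tau>) * g \<sigma>) = (\<Sum>s\<in>{-int b..int b}. \<psi> s * g (s+\<tau>))"
proof -
  have "(\<Sum>\<sigma>\<in>{-int P..int P}. \<psi> (\<sigma>-\<tau>) * g \<sigma>) = (\<Sum>s\<in>(\<lambda>\<sigma>. \<sigma>-\<tau>) ` {-int P..int P}. \<psi> s * g (s+\<tau>))"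
    by (subst sum.reindex) (auto simp: inj_on_def)
  also have "\<dots> = (\<Sum>s\<in>{-int b..int b}. \<psi> s * g (s+\<tau>))"
  proof (rule sum.mono_neutral_right)
    show "{-int b..int b} \<subseteq> (\<lambda>\<sigma>. \<sigma>-\<tau>) ` {-int P..int P}"
    proof
      fix s assume "s \<in> {-int b..int b}"
      then show "s \<in> (\<lambda>\<sigma>. \<sigma>-\<tau>) ` {-int P..int P}"
        using assms by (intro image_eqI[of _ _ "s+\<tau>"]) auto
    qed
  qed (use supp_in_out[OF assms(1)] in auto)
  finally show ?thesis .
qed

lemma conv_supp:
  assumes "u \<in> supp_in a" "v \<in> supp_in b"
  shows "conv u v \<in> supp_in (a+b)"
  unfolding supp_in_def
proof (intro CollectI allI impI)
  fix t assume t: "\<bar>t\<bar> > int (a+b)"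
  show "conv u v t = 0" unfolding conv_eq[OF assms(1)]
    by (rule sum.neutral) (use t supp_inD[OF assms(2)] in auto)
qed

definition delta :: cseq where "delta = (\<lambda>t. if t = 0 then 1 else 0)"

lemma delta_supp: "delta \<in> supp_in 0" by (auto simp: supp_in_def delta_def)

lemma conv_delta: "conv delta x = x"
proof
  fix t show "conv delta x t = x t" unfolding conv_eq[OF delta_supp] by (simp add: delta_def)
qed

lemma conv_assoc:
  assumes "u \<in> supp_in a" "v \<in> supp_in b"
  shows "conv (conv u v) x = conv u (conv v x)"
proof
  fix t
  have "conv (conv u v) x t = (\<Sum>\<sigma>\<in>{-int (a+b)..int (a+b)}. (\<Sum>\<tau>\<in>{-int a..int a}. u \<tau> * v (\<sigma>-\<tau>)) * x (t-\<sigma>))"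
    by (simp add: conv_eq[OF conv_supp[OF assms]] conv_eq[OF assms(1)])
  also have "\<dots> = (\<Sum>\<tau>\<in>{-int a..int a}. u \<tau> * (\<Sum>\<sigma>\<in>{-int (a+b)..int (a+b)}. v (\<sigma>-\<tau>) * x (t-\<sigma>)))"
    by (simp add: sum_distrib_left sum_distrib_right mult.assoc) (subst sum.swap, rule refl)
  also have "\<dots> = (\<Sum>\<tau>\<in>{-int a..int a}. u \<tau> * (\<Sum>s\<in>{-int b..int b}. v s * x (t-(s+\<tau>))))"
  proof (rule sum.cong[OF refl])
    fix \<tau> assume "\<tau> \<in> {-int a..int a}"
    then have "\<bar>\<tau>\<bar> \<le> int a" by auto
    from shift_sum[OF assms(2) this, of "a+b" "\<lambda>\<sigma>. x (t-\<sigma>)"]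
    show "u \<tau> * (\<Sum>\<sigma>\<in>{-int (a+b)..int (a+b)}. v (\<sigma>-\<tau>) * x (t-\<sigma>)) = u \<tau> * (\<Sum>s\<in>{-int b..int b}. v s * x (t-(s+\<tau>)))"
      by simp
  qed
  also have "\<dots> = conv u (conv v x) t"
    by (simp add: conv_eq[OF assms(1)] conv_eq[OF assms(2)] algebra_simps)
  finally show "conv (conv u v) x t = conv u (conv v x) t" .
qed

lemma conv_pow_supp: "\<phi> \<in> supp_in m \<Longrightarrow> conv_pow \<phi> k \<in> supp_in (k*m)"
proof (induction k)
  case 0 then show ?case using delta_supp by (simp add: delta_def)
next
  case (Suc k) then show ?case using conv_supp[of \<phi> m "conv_pow \<phi> k" "k*m"] by simp
qed

lemma conv_pow_repr:
  assumes "\<phi> \<in> supp_in m" "reproduces \<phi> X"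
  shows "reproduces (conv_pow \<phi> (Suc k)) X"
proof (induction k)
  case 0
  have "conv (conv \<phi> delta) x = x" if "x \<in> X" for x
    using conv_assoc[OF assms(1) delta_supp] conv_delta assms(2) that
    by (simp add: reproduces_def)
  then show ?case by (simp add: reproduces_def delta_def[symmetric])
next
  case (Suc k)
  have "conv (conv \<phi> (conv_pow \<phi> (Suc k))) x = x" if "x \<in> X" for x
  proof -
    have "conv (conv \<phi> (conv_pow \<phi> (Suc k))) x = conv \<phi> (conv (conv_pow \<phi> (Suc k)) x)"
      by (rule conv_assoc[OF assms(1) conv_pow_supp[OF assms(1)]])
    also have "conv (conv_pow \<phi> (Suc k)) x = x" using Suc that by (simp only: reproduces_def)
    finally show ?thesis using assms(2) that by (simp add: reproduces_def)
  qed
  then show ?case by (simp add: reproduces_def)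
qed



definition E :: "nat \<Rightarrow> nat \<Rightarrow> int \<Rightarrow> complex" where
  "E p j \<tau> = exp (- \<i> * complex_of_real (2 * pi * real j * real_of_int \<tau> / real (2*p+1)))"

definition FT :: "nat \<Rightarrow> cseq \<Rightarrow> nat \<Rightarrow> complex" where
  "FT p u j = (\<Sum>\<tau>\<in>{-int p..int p}. E p j \<tau> * u \<tau>)"

lemma dft_FT: "dft p u j = complex_of_real (1 / sqrt (real (2*p+1))) * FT p u j"
  by (simp add: dft_def FT_def E_def)

lemma E_add: "E p j (s+\<tau>) = E p j s * E p j \<tau>"
  unfolding E_def by (simp add: exp_add[symmetric] distrib_left add_divide_distrib algebra_simps)

lemma E_zero: "E p j 0 = 1" by (simp add: E_def)

lemma FT_conv:
  assumes "u \<in> supp_in a" "v \<in> supp_in b" "a + b \<le> p"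
  shows "FT p (conv u v) j = FT p u j * FT p v j"
proof -
  have "FT p (conv u v) j = (\<Sum>\<sigma>\<in>{-int p..int p}. E p j \<sigma> * (\<Sum>\<tau>\<in>{-int a..int a}. u \<tau> * v (\<sigma>-\<tau>)))"
    by (simp add: FT_def conv_eq[OF assms(1)])
  also have "\<dots> = (\<Sum>\<tau>\<in>{-int a..int a}. u \<tau> * (\<Sum>\<sigma>\<in>{-int p..int p}. v (\<sigma>-\<tau>) * E p j \<sigma>))"
    by (simp add: sum_distrib_left sum_distrib_right mult_ac) (subst sum.swap, rule refl)
  also have "\<dots> = (\<Sum>\<tau>\<in>{-int a..int a}. u \<tau> * (\<Sum>s\<in>{-int b..int b}. v s * E p j (s+\<tau>)))"
  proof (rule sum.cong[OF refl])
    fix \<tau> assume "\<tau> \<in> {-int a..int a}"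
    then have "\<bar>\<tau>\<bar> \<le> int a" by auto
    from shift_sum[OF assms(2) this assms(3), of "E p j"]
    show "u \<tau> * (\<Sum>\<sigma>\<in>{-int p..int p}. v (\<sigma>-\<tau>) * E p j \<sigma>) = u \<tau> * (\<Sum>s\<in>{-int b..int b}. v s * E p j (s+\<tau>))"
      by simp
  qed
  also have "\<dots> = (\<Sum>\<tau>\<in>{-int a..int a}. E p j \<tau> * u \<tau>) * (\<Sum>s\<in>{-int b..int b}. E p j s * v s)"
  proof -
    have h: "u \<tau> * (\<Sum>s\<in>{-int b..int b}. v s * E p j (s+\<tau>)) = (E p j \<tau> * u \<tau>) * (\<Sum>s\<in>{-int b..int b}. E p j s * v s)" for \<tau>
      by (simp add: E_add sum_distrib_left mult_ac)
    show ?thesis unfolding h by (rule sum_distrib_right[symmetric])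
  qed
  also have "\<dots> = FT p u j * FT p v j"
    unfolding FT_def using assms
    by (simp only: sum_supp_big[OF assms(1), where P=p] sum_supp_big[OF assms(2), where P=p])
  finally show ?thesis .
qed

lemma FT_pow:
  assumes "\<phi> \<in> supp_in m" "k * m \<le> p"
  shows "FT p (conv_pow \<phi> k) j = (FT p \<phi> j) ^ k"
  using assms(2)
proof (induction k)
  case 0
  have "FT p (conv_pow \<phi> 0) j = (\<Sum>\<tau>\<in>{-int 0..int 0}. E p j \<tau> * delta \<tau>)"
    unfolding FT_def using sum_supp_big[OF delta_supp le0, where g="E p j"] by (simp add: delta_def)
  then show ?case by (simp add: delta_def E_zero)
next
  case (Suc k)
  then show ?case
    using FT_conv[OF assms(1) conv_pow_supp[OF assms(1), of k], where p=p and j=j] by simp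
qed

definition w :: "nat \<Rightarrow> int \<Rightarrow> complex" where
  "w p d = exp (- \<i> * complex_of_real (2 * pi * real_of_int d / real (2*p+1)))"

lemma E_cnj: "E p j \<tau> * cnj (E p j \<sigma>) = (w p (\<tau>-\<sigma>)) ^ j"
proof -
  have "E p j \<tau> * cnj (E p j \<sigma>) = exp (of_nat j * (- \<i> * complex_of_real (2 * pi * real_of_int (\<tau>-\<sigma>) / real (2*p+1))))"
    unfolding E_def exp_cnj exp_add[symmetric]
  proof (rule arg_cong[where f=exp])
    have r: "2 * pi * real j * real_of_int \<tau> / real (2*p+1) - 2 * pi * real j * real_of_int \<sigma> / real (2*p+1)
       = real j * (2 * pi * real_of_int (\<tau>-\<sigma>) / real (2*p+1))"
      by (simp add: algebra_simps diff_divide_distrib)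
    have "- \<i> * complex_of_real (2 * pi * real j * real_of_int \<tau> / real (2*p+1)) + cnj (- \<i> * complex_of_real (2 * pi * real j * real_of_int \<sigma> / real (2*p+1)))
      = - \<i> * complex_of_real (2 * pi * real j * real_of_int \<tau> / real (2*p+1) - 2 * pi * real j * real_of_int \<sigma> / real (2*p+1))"
      by (simp add: algebra_simps)
    also have "\<dots> = of_nat j * (- \<i> * complex_of_real (2 * pi * real_of_int (\<tau>-\<sigma>) / real (2*p+1)))"
      unfolding r by simp
    finally show "- \<i> * complex_of_real (2 * pi * real j * real_of_int \<tau> / real (2*p+1)) + cnj (- \<i> * complex_of_real (2 * pi * real j * real_of_int \<sigma> / real (2*p+1)))
      = of_nat j * (- \<i> * complex_of_real (2 * pi * real_of_int (\<tau>-\<sigma>) / real (2*p+1)))" .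
  qed
  then show ?thesis by (simp only: exp_of_nat_mult w_def)
qed

lemma geo:
  assumes "\<bar>d\<bar> \<le> 2 * int p"
  shows "(\<Sum>j<2*p+1. (w p d) ^ j) = (if d = 0 then of_nat (2*p+1) else 0)"
proof (cases "d = 0")
  case True then show ?thesis by (simp add: w_def)
next
  case False
  have N: "real (2*p+1) > 0" by simp
  have ne: "w p d \<noteq> 1"
  proof
    assume "w p d = 1"
    then obtain n :: int where n: "- (2 * pi * real_of_int d / real (2*p+1)) = real_of_int (2 * n) * pi"
      unfolding w_def exp_eq_1 by auto
    then have "pi * (- real_of_int d) = pi * (real_of_int n * real (2*p+1))"
      using N by (simp add: field_simps)
    then have "- real_of_int d = real_of_int n * real (2*p+1)"
      using pi_neq_zero mult_left_cancel by blast
    then have "- d = n * int (2*p+1)"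
      by (metis of_int_eq_iff of_int_mult of_int_of_nat_eq of_int_minus)
    then have "int (2*p+1) dvd d" by (metis dvd_minus_iff dvd_triv_right)
    then have "\<bar>int (2*p+1)\<bar> \<le> \<bar>d\<bar>" by (rule dvd_imp_le_int[OF False])
    with assms show False by simp
  qed
  have "(w p d) ^ (2*p+1) = exp (of_nat (2*p+1) * (- \<i> * complex_of_real (2 * pi * real_of_int d / real (2*p+1))))"
    by (simp only: w_def exp_of_nat_mult)
  also have "\<dots> = exp (- \<i> * complex_of_real (real (2*p+1) * (2 * pi * real_of_int d / real (2*p+1))))"
    by (intro arg_cong[where f=exp]) (simp only: of_real_mult of_real_of_nat_eq mult_ac)
  also have "\<dots> = exp (- \<i> * complex_of_real (2 * pi * real_of_int d))"
    using N by simp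
  also have "\<dots> = 1"
    unfolding exp_eq_1 by (auto intro!: exI[of _ "-d"])
  finally have one: "(w p d) ^ (2*p+1) = 1" .
  have "(\<Sum>j<2*p+1. (w p d) ^ j) = ((w p d) ^ (2*p+1) - 1) / (w p d - 1)"
    by (rule geometric_sum[OF ne])
  also have "\<dots> = 0" unfolding one by simp
  finally show ?thesis using False by (simp only: if_False)
qed



lemma FT_cnj:
  "FT p u j * cnj (FT p u j) = (\<Sum>\<tau>\<in>{-int p..int p}. \<Sum>\<sigma>\<in>{-int p..int p}. (w p (\<tau>-\<sigma>)) ^ j * (u \<tau> * cnj (u \<sigma>)))"
  unfolding FT_def cnj_sum complex_cnj_mult sum_product
proof (rule sum.cong[OF refl], rule sum.cong[OF refl])
  fix \<tau> \<sigma>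
  have "E p j \<tau> * u \<tau> * (cnj (E p j \<sigma>) * cnj (u \<sigma>)) = (E p j \<tau> * cnj (E p j \<sigma>)) * (u \<tau> * cnj (u \<sigma>))"
    by (simp only: mult_ac)
  then show "E p j \<tau> * u \<tau> * (cnj (E p j \<sigma>) * cnj (u \<sigma>)) = (w p (\<tau>-\<sigma>)) ^ j * (u \<tau> * cnj (u \<sigma>))"
    by (simp only: E_cnj)
qed

lemma parseval_c:
  "(\<Sum>j<2*p+1. FT p u j * cnj (FT p u j)) = of_nat (2*p+1) * (\<Sum>\<tau>\<in>{-int p..int p}. u \<tau> * cnj (u \<tau>))"
proof -
  let ?I = "{-int p..int p}"
  have "(\<Sum>j<2*p+1. FT p u j * cnj (FT p u j))
      = (\<Sum>j<2*p+1. \<Sum>\<tau>\<in>?I. \<Sum>\<sigma>\<in>?I. (w p (\<tau>-\<sigma>)) ^ j * (u \<tau> * cnj (u \<sigma>)))"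
    by (simp only: FT_cnj)
  also have "\<dots> = (\<Sum>\<tau>\<in>?I. \<Sum>\<sigma>\<in>?I. (\<Sum>j<2*p+1. (w p (\<tau>-\<sigma>)) ^ j) * (u \<tau> * cnj (u \<sigma>)))"
    by (simp only: sum_distrib_right, rule trans[OF sum.swap], rule sum.cong[OF refl], rule sum.swap)
  also have "\<dots> = (\<Sum>\<tau>\<in>?I. \<Sum>\<sigma>\<in>?I. (if \<tau> = \<sigma> then of_nat (2*p+1) * (u \<tau> * cnj (u \<sigma>)) else 0))"
  proof (rule sum.cong[OF refl], rule sum.cong[OF refl])
    fix \<tau> \<sigma> assume "\<tau> \<in> ?I" "\<sigma> \<in> ?I"
    then have "\<bar>\<tau>-\<sigma>\<bar> \<le> 2 * int p" by auto
    from geo[OF this] show "(\<Sum>j<2*p+1. (w p (\<tau>-\<sigma>)) ^ j) * (u \<tau> * cnj (u \<sigma>)) = (if \<tau> = \<sigma> then of_nat (2*p+1) * (u \<tau> * cnj (u \<sigma>)) else 0)"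
      by simp
  qed
  also have "\<dots> = of_nat (2*p+1) * (\<Sum>\<tau>\<in>?I. u \<tau> * cnj (u \<tau>))"
    by (simp add: sum_distrib_left)
  finally show ?thesis .
qed

lemma parseval:
  "(\<Sum>j\<le>2*p. (cmod (dft p u j))\<^sup>2) = (\<Sum>\<tau>\<in>{-int p..int p}. (cmod (u \<tau>))\<^sup>2)"
proof -
  have N: "real (2*p+1) > 0" by simp
  have "complex_of_real (\<Sum>j\<le>2*p. (cmod (dft p u j))\<^sup>2) = (\<Sum>j<2*p+1. dft p u j * cnj (dft p u j))"
  proof -
    have "{..2*p} = {..<2*p+1}" by auto
    then show ?thesis by (simp only: of_real_sum complex_norm_square)
  qed
  also have "\<dots> = (\<Sum>j<2*p+1. complex_of_real (1 / real (2*p+1)) * (FT p u j * cnj (FT p u j)))"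
  proof (rule sum.cong[OF refl])
    fix j
    let ?c = "complex_of_real (1 / sqrt (real (2*p+1)))"
    have r: "(1 / sqrt (real (2*p+1))) * (1 / sqrt (real (2*p+1))) = 1 / real (2*p+1)"
      by (simp only: times_divide_times_eq real_sqrt_mult_self abs_of_nat mult_1_left)
    have "?c * cnj ?c = complex_of_real (1 / real (2*p+1))"
      unfolding complex_cnj_complex_of_real of_real_mult[symmetric] r ..
    moreover have "dft p u j * cnj (dft p u j) = (?c * cnj ?c) * (FT p u j * cnj (FT p u j))"
      unfolding dft_FT complex_cnj_mult by (simp only: mult_ac)
    ultimately show "dft p u j * cnj (dft p u j) = complex_of_real (1 / real (2*p+1)) * (FT p u j * cnj (FT p u j))"
      by simp
  qed
  also have "\<dots> = complex_of_real (1 / real (2*p+1)) * of_nat (2*p+1) * (\<Sum>\<tau>\<in>{-int p..int p}. u \<tau> * cnj (u \<tau>))"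
    by (simp only: sum_distrib_left[symmetric] parseval_c mult.assoc)
  also have "\<dots> = (\<Sum>\<tau>\<in>{-int p..int p}. u \<tau> * cnj (u \<tau>))"
  proof -
    have e: "(of_nat (2*p+1) :: complex) = complex_of_real (real (2*p+1))" by simp
    have "complex_of_real (1 / real (2*p+1)) * of_nat (2*p+1) = 1"
      unfolding e of_real_mult[symmetric] using N by simp
    then show ?thesis by simp
  qed
  also have "\<dots> = complex_of_real (\<Sum>\<tau>\<in>{-int p..int p}. (cmod (u \<tau>))\<^sup>2)"
    by (simp only: of_real_sum complex_norm_square)
  finally show ?thesis using of_real_eq_iff by blast
qed



lemma l2norm_eq:
  assumes "u \<in> supp_in p"
  shows "l2norm u = sqrt (\<Sum>\<tau>\<in>{-int p..int p}. (cmod (u \<tau>))\<^sup>2)"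
  unfolding l2norm_def
  by (subst infsum_supp[where S="{-int p..int p}"]) (use supp_in_out[OF assms] in auto)

lemma l2norm_nonneg: "l2norm u \<ge> 0" unfolding l2norm_def by (simp add: infsum_nonneg)

lemma cmod_dft: "cmod (dft p u j) = (1 / sqrt (real (2*p+1))) * cmod (FT p u j)"
  unfolding dft_FT norm_mult norm_of_real by simp

lemma l2_le_l1:
  assumes "u \<in> supp_in p"
  shows "l2norm u \<le> dft_l1 p u"
proof -
  have "l2norm u = sqrt (\<Sum>j\<le>2*p. (cmod (dft p u j))\<^sup>2)"
    unfolding l2norm_eq[OF assms] parseval ..
  also have "\<dots> = L2_set (\<lambda>j. cmod (dft p u j)) {..2*p}" by (simp add: L2_set_def)
  also have "\<dots> \<le> dft_l1 p u" unfolding dft_l1_def by (rule L2_set_le_sum) simp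
  finally show ?thesis .
qed

lemma FT_bound:
  assumes "\<phi> \<in> supp_in m" "m \<le> p"
  shows "cmod (FT p \<phi> j) \<le> sqrt (real (2*m+1)) * l2norm \<phi>"
proof -
  have "FT p \<phi> j = (\<Sum>\<tau>\<in>{-int m..int m}. E p j \<tau> * \<phi> \<tau>)"
    unfolding FT_def by (rule sum_supp_big[OF assms])
  then have "cmod (FT p \<phi> j) \<le> (\<Sum>\<tau>\<in>{-int m..int m}. cmod (E p j \<tau> * \<phi> \<tau>))"
    by (simp only: norm_sum)
  also have "\<dots> = (\<Sum>\<tau>\<in>{-int m..int m}. \<bar>cmod (\<phi> \<tau>)\<bar> * \<bar>1\<bar>)"
    by (rule sum.cong[OF refl]) (simp add: norm_mult E_def)
  also have "\<dots> \<le> L2_set (\<lambda>\<tau>. cmod (\<phi> \<tau>)) {-int m..int m} * L2_set (\<lambda>_. 1) {-int m..int m}"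
    by (rule L2_set_mult_ineq)
  also have "L2_set (\<lambda>_. 1::real) {-int m..int m} = sqrt (real (2*m+1))"
    by (simp add: L2_set_def)
  also have "L2_set (\<lambda>\<tau>. cmod (\<phi> \<tau>)) {-int m..int m} = l2norm \<phi>"
    by (simp add: L2_set_def l2norm_eq[OF assms(1)])
  finally show ?thesis by (simp add: mult.commute)
qed

lemma k_le_pow: "k \<ge> 1 \<Longrightarrow> real k \<le> 2 ^ (k-1)"
proof -
  assume "k \<ge> 1"
  have "k - 1 < 2 ^ (k-1)" by (rule less_exp)
  then have "k \<le> (2::nat) ^ (k-1)" using \<open>k \<ge> 1\<close> by linarith
  then show ?thesis by (metis of_nat_le_iff of_nat_numeral of_nat_power)
qed

lemma main_bound:
  assumes phi: "\<phi> \<in> supp_in m" and nrm: "l2norm \<phi> \<le> R / sqrt (real (2*m+1))" and k: "k \<ge> 2"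
  shows "dft_l1 (k*m) (conv_pow \<phi> k) \<le> 2 ^ (k-1) * R ^ k / sqrt (real (2*k*m+1))"
proof -
  define p where "p = k*m"
  define N where "N = real (2*p+1)"
  define n where "n = real (2*m+1)"
  define a where "a j = cmod (FT p \<phi> j)" for j
  define s where "s = 1 / sqrt N"
  have Npos: "N > 0" and npos: "n > 0" unfolding N_def n_def by simp_all
  have mp: "m \<le> p" unfolding p_def using k by simp
  have phip: "\<phi> \<in> supp_in p" by (rule supp_in_mono[OF phi mp])
  have R0: "R \<ge> 0"
  proof -
    have "0 \<le> R / sqrt n" using l2norm_nonneg[of \<phi>] nrm unfolding n_def by linarith
    then show ?thesis using npos by (simp add: zero_le_divide_iff)
  qed
  have aR: "a j \<le> R" for j
  proof -
    have "a j \<le> sqrt n * l2norm \<phi>" unfolding a_def n_def by (rule FT_bound[OF phi mp])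
    also have "\<dots> \<le> sqrt n * (R / sqrt n)" using nrm npos unfolding n_def by (intro mult_left_mono) auto
    also have "\<dots> = R" using npos by simp
    finally show ?thesis .
  qed
  have a0: "a j \<ge> 0" for j unfolding a_def by simp
  have l2sq: "(l2norm \<phi>)\<^sup>2 \<le> R\<^sup>2 / n"
  proof -
    have "(l2norm \<phi>)\<^sup>2 \<le> (R / sqrt n)\<^sup>2"
      using nrm l2norm_nonneg[of \<phi>] unfolding n_def by (intro power_mono) auto
    also have "\<dots> = R\<^sup>2 / n" using npos by (simp add: power_divide)
    finally show ?thesis .
  qed
  have ss: "s * s = 1 / N" unfolding s_def using Npos by (simp add: real_sqrt_mult_self)
  have sumsq: "(\<Sum>j\<le>2*p. (a j)\<^sup>2) = N * (l2norm \<phi>)\<^sup>2"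
  proof -
    have "(l2norm \<phi>)\<^sup>2 = (\<Sum>\<tau>\<in>{-int p..int p}. (cmod (\<phi> \<tau>))\<^sup>2)"
      unfolding l2norm_eq[OF phip] by (simp add: sum_nonneg)
    also have "\<dots> = (\<Sum>j\<le>2*p. (cmod (dft p \<phi> j))\<^sup>2)" by (rule parseval[symmetric])
    also have "\<dots> = (\<Sum>j\<le>2*p. (s * s) * (a j)\<^sup>2)"
      unfolding cmod_dft a_def s_def N_def by (simp add: power2_eq_square mult_ac)
    also have "\<dots> = (\<Sum>j\<le>2*p. (a j)\<^sup>2) / N" unfolding ss by (simp add: sum_divide_distrib)
    finally show ?thesis using Npos by (simp add: field_simps)
  qed
  have "dft_l1 p (conv_pow \<phi> k) = (\<Sum>j\<le>2*p. s * (a j) ^ k)"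
    unfolding dft_l1_def cmod_dft FT_pow[OF phi, of k p, unfolded p_def[symmetric], OF order_refl] norm_power
    by (simp add: a_def s_def N_def)
  also have "\<dots> \<le> (\<Sum>j\<le>2*p. s * (R ^ (k-2) * (a j)\<^sup>2))"
  proof (rule sum_mono)
    fix j
    have "(a j) ^ k = (a j) ^ (k-2) * (a j)\<^sup>2" using k by (metis le_add_diff_inverse2 power_add)
    also have "\<dots> \<le> R ^ (k-2) * (a j)\<^sup>2"
      by (intro mult_right_mono power_mono) (use aR a0 in auto)
    finally show "s * (a j) ^ k \<le> s * (R ^ (k-2) * (a j)\<^sup>2)"
      unfolding s_def using Npos by (intro mult_left_mono) auto
  qed
  also have "\<dots> = s * R ^ (k-2) * (N * (l2norm \<phi>)\<^sup>2)"
    by (simp only: sum_distrib_left[symmetric] mult.assoc sumsq)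
  also have "\<dots> \<le> s * R ^ (k-2) * (N * (R\<^sup>2 / n))"
  proof (rule mult_left_mono)
    show "N * (l2norm \<phi>)\<^sup>2 \<le> N * (R\<^sup>2 / n)" using l2sq Npos by (intro mult_left_mono) auto
    have "s \<ge> 0" unfolding s_def using Npos by simp
    then show "0 \<le> s * R ^ (k-2)" using R0 by simp
  qed
  also have "\<dots> = R ^ k * (sqrt N / n)"
  proof -
    have sN: "s * N = sqrt N" unfolding s_def using Npos by (simp add: real_div_sqrt)
    have Rk: "R ^ (k-2) * R\<^sup>2 = R ^ k" using k by (metis le_add_diff_inverse2 power_add)
    have "s * R ^ (k-2) * (N * (R\<^sup>2 / n)) = (R ^ (k-2) * R\<^sup>2) * (s * N) / n"
      by (simp only: times_divide_eq_right mult_ac)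
    then show ?thesis unfolding sN Rk by simp
  qed
  also have "\<dots> \<le> R ^ k * (2 ^ (k-1) / sqrt N)"
  proof (rule mult_left_mono)
    have "N \<le> 2 ^ (k-1) * n"
    proof -
      have "N \<le> real k * n" unfolding N_def n_def p_def using k by (simp add: algebra_simps)
      also have "\<dots> \<le> 2 ^ (k-1) * n" using k_le_pow[of k] k npos by (intro mult_right_mono) auto
      finally show ?thesis .
    qed
    then have "sqrt N * sqrt N \<le> 2 ^ (k-1) * n" using Npos by simp
    then show "sqrt N / n \<le> 2 ^ (k-1) / sqrt N"
      using Npos npos by (simp add: field_simps)
  qed (use R0 in simp)
  also have "\<dots> = 2 ^ (k-1) * R ^ k / sqrt (real (2*k*m+1))"
    unfolding N_def p_def by (simp add: mult.assoc)
  finally show ?thesis unfolding p_def .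
qed



lemma c_odd:
  assumes "k \<ge> (1::nat)"
  shows "(2::real) ^ (2*k+1-1) \<le> 3 * sqrt (real (2*k+1)) * ((2::real) ^ (k-1))\<^sup>2"
proof -
  have e: "(2::real) ^ (2*k+1-1) = 4 * ((2::real) ^ (k-1))\<^sup>2"
  proof -
    have h: "2*k+1-1 = 2 + (k-1)*2" using assms by simp
    show ?thesis unfolding h power_add power_mult by simp
  qed
  have "sqrt 3 \<le> sqrt (real (2*k+1))" using assms by simp
  moreover have "4/3 \<le> sqrt (3::real)" by (rule real_le_rsqrt) (simp add: power2_eq_square)
  ultimately have "4 \<le> 3 * sqrt (real (2*k+1))" by linarith
  then show ?thesis unfolding e by (intro mult_right_mono) auto
qed

lemma c_bigo: "(\<lambda>k::nat. ln ((2::real) ^ (k-1))) \<in> O(\<lambda>k. real k * ln (real k))"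
proof (rule bigoI[where c=1])
  show "\<forall>\<^sub>F k in at_top. norm (ln ((2::real) ^ (k-1))) \<le> 1 * norm (real k * ln (real k))"
    using eventually_ge_at_top[of "3::nat"]
  proof (rule eventually_mono)
    fix k :: nat assume k: "3 \<le> k"
    have l2: "ln 2 \<le> ln (real k)" using k by simp
    have "ln (2::real) \<ge> 0" by simp
    have "norm (ln ((2::real) ^ (k-1))) = real (k-1) * ln 2" by (simp add: ln_realpow)
    also have "\<dots> \<le> real k * ln (real k)"
      using k l2 \<open>ln 2 \<ge> 0\<close> by (intro mult_mono) auto
    also have "\<dots> = 1 * norm (real k * ln (real k))" using k by simp
    finally show "norm (ln ((2::real) ^ (k-1))) \<le> 1 * norm (real k * ln (real k))" .
  qed
qed

theorem proposition9:
  "\<exists>c :: nat \<Rightarrow> real.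
     (\<forall>k\<ge>1. c k > 0) \<and> c 1 = 1 \<and>
     (\<forall>p. c (2^p) = 2 ^ (2^p - 1)) \<and>
     (\<forall>k\<ge>1. c (2*k+1) \<le> 3 * sqrt (real (2*k+1)) * (c k)\<^sup>2) \<and>
     (\<lambda>k. ln (c k)) \<in> O(\<lambda>k. real k * ln (real k)) \<and>
     (\<forall>(X :: cseq set) (\<phi> :: cseq) (m :: nat) (R :: real).
        \<phi> \<in> supp_in m \<and> reproduces \<phi> X \<and> l2norm \<phi> \<le> R / sqrt (real (2*m+1)) \<longrightarrow>
        (\<forall>k\<ge>2. conv_pow \<phi> k \<in> supp_in (k*m) \<and> reproduces (conv_pow \<phi> k) X \<and>
            l2norm (conv_pow \<phi> k) \<le> dft_l1 (k*m) (conv_pow \<phi> k) \<and>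
            dft_l1 (k*m) (conv_pow \<phi> k) \<le> c k * R ^ k / sqrt (real (2*k*m+1))))"
proof (rule exI[where x="\<lambda>k. (2::real) ^ (k-1)"], intro conjI allI impI)
  show "(\<lambda>k. ln ((2::real) ^ (k-1))) \<in> O(\<lambda>k. real k * ln (real k))" by (rule c_bigo)
next
  fix k :: nat assume "k \<ge> 1"
  then show "(2::real) ^ (2*k+1-1) \<le> 3 * sqrt (real (2*k+1)) * ((2::real) ^ (k-1))\<^sup>2"
    by (rule c_odd)
next
  fix X \<phi> m R k
  assume H: "\<phi> \<in> supp_in m \<and> reproduces \<phi> X \<and> l2norm \<phi> \<le> R / sqrt (real (2*m+1))"
    and k: "(2::nat) \<le> k"
  then have phi: "\<phi> \<in> supp_in m" and rep: "reproduces \<phi> X" and nrm: "l2norm \<phi> \<le> R / sqrt (real (2*m+1))"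
    by auto
  show "conv_pow \<phi> k \<in> supp_in (k*m)" by (rule conv_pow_supp[OF phi])
  show "reproduces (conv_pow \<phi> k) X"
    using conv_pow_repr[OF phi rep, of "k-1"] k by simp
  show "l2norm (conv_pow \<phi> k) \<le> dft_l1 (k*m) (conv_pow \<phi> k)"
    by (rule l2_le_l1[OF conv_pow_supp[OF phi]])
  show "dft_l1 (k*m) (conv_pow \<phi> k) \<le> 2 ^ (k-1) * R ^ k / sqrt (real (2*k*m+1))"
    by (rule main_bound[OF phi nrm k])
qed simp_all


end
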